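(* Let $G=(V,E)$ be an $n$-vertex graph, $q>0$ an integer, and $0<\alpha\le1$. Let $V_\alpha=\{v\in V: r(v)\ge\alpha\}$ and $c_q=\sum_{i=0}^{q}q^i$. Then every $v\in V_\alpha$ satisfies $\deg(v)\ge n\alpha/c_q$.
   Context: $q$-random BFS ($q$-RBFS) from a vertex $v$ in the random neighbor model (where a random neighbor query for $u$ returns a uniformly random neighbor of $u$): initialize a queue $Q=(v)$, level $\ell[v]=0$ (all others $\infty$), and $H=(\{v\},\emptyset)$ rooted at $v$; while $Q$ is nonempty, pop $u$ and make $q$ independent random neighbor queries for $u$ obtaining $s_{u,1},\dots,s_{u,q}$; for each $i$ add $s_{u,i}$ and the edge $\{u,s_{u,i}\}$ to $H$, and if $\ell[u]<q-1$ and $\ell[s_{u,i}]=\infty$, set $\ell[s_{u,i}]=\ell[u]+1$ and enqueue $s_{u,i}$; return $H$ (undirected, simple). The reach probability $r(v)$ of a vertex $v$ is the probability that a $q$-RBFS started at a uniformly random vertex of $V$ reaches (includes) $v$. *)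

theory Defs
  imports "HOL-Probability.Probability"
begin

definition nbrs :: "'a set \<Rightarrow> ('a \<Rightarrow> 'a \<Rightarrow> bool) \<Rightarrow> 'a \<Rightarrow> 'a set" where
  "nbrs V E u = {w \<in> V. E u w}"

definition deg :: "'a set \<Rightarrow> ('a \<Rightarrow> 'a \<Rightarrow> bool) \<Rightarrow> 'a \<Rightarrow> nat" where
  "deg V E u = card (nbrs V E u)"

fun rn_queries :: "'a set \<Rightarrow> ('a \<Rightarrow> 'a \<Rightarrow> bool) \<Rightarrow> 'a \<Rightarrow> nat \<Rightarrow> 'a list pmf" where
  "rn_queries V E u 0 = return_pmf []"
| "rn_queries V E u (Suc k) =
     bind_pmf (pmf_of_set (nbrs V E u)) (\<lambda>s. map_pmf (\<lambda>xs. s # xs) (rn_queries V E u k))"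

text \<open>State of the q-RBFS: queue Q, levels (None = infinity), vertex set and edge set of H.\<close>
type_synonym 'a rbfs_state = "'a list \<times> ('a \<Rightarrow> nat option) \<times> 'a set \<times> 'a set set"

definition rbfs_process :: "nat \<Rightarrow> 'a \<Rightarrow> nat \<Rightarrow> 'a \<Rightarrow> 'a rbfs_state \<Rightarrow> 'a rbfs_state" where
  "rbfs_process q u lu s st = (case st of (Q, lvl, HV, HE) \<Rightarrow>
     (if lu < q - 1 \<and> lvl s = None
      then (Q @ [s], lvl(s := Some (lu + 1)), insert s HV, insert {u, s} HE)
      else (Q, lvl, insert s HV, insert {u, s} HE)))"

definition rbfs_step :: "'a set \<Rightarrow> ('a \<Rightarrow> 'a \<Rightarrow> bool) \<Rightarrow> nat \<Rightarrow> 'a rbfs_state \<Rightarrow> 'a rbfs_state pmf" where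
  "rbfs_step V E q st = (case st of (Q, lvl, HV, HE) \<Rightarrow>
     (case Q of [] \<Rightarrow> return_pmf st
      | u # Q' \<Rightarrow> map_pmf (\<lambda>ss. fold (rbfs_process q u (the (lvl u))) ss (Q', lvl, HV, HE))
                          (rn_queries V E u q)))"

fun rbfs_iter :: "'a set \<Rightarrow> ('a \<Rightarrow> 'a \<Rightarrow> bool) \<Rightarrow> nat \<Rightarrow> nat \<Rightarrow> 'a rbfs_state \<Rightarrow> 'a rbfs_state pmf" where
  "rbfs_iter V E q 0 st = return_pmf st"
| "rbfs_iter V E q (Suc k) st = bind_pmf (rbfs_step V E q st) (rbfs_iter V E q k)"

text \<open>Each vertex is enqueued at most once, so the loop makes at most card V
  pops; running card V iterations (extra ones are no-ops) yields the loop's output.\<close>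
definition qRBFS :: "'a set \<Rightarrow> ('a \<Rightarrow> 'a \<Rightarrow> bool) \<Rightarrow> nat \<Rightarrow> 'a \<Rightarrow> ('a set \<times> 'a set set) pmf" where
  "qRBFS V E q v =
     map_pmf (\<lambda>(Q, lvl, HV, HE). (HV, HE))
       (rbfs_iter V E q (card V) ([v], (\<lambda>_. None)(v := Some 0), {v}, {}))"

definition reach_prob :: "'a set \<Rightarrow> ('a \<Rightarrow> 'a \<Rightarrow> bool) \<Rightarrow> nat \<Rightarrow> 'a \<Rightarrow> real" where
  "reach_prob V E q v =
     measure_pmf.prob (bind_pmf (pmf_of_set V) (qRBFS V E q)) {H. v \<in> fst H}"

definition V_alpha :: "'a set \<Rightarrow> ('a \<Rightarrow> 'a \<Rightarrow> bool) \<Rightarrow> nat \<Rightarrow> real \<Rightarrow> 'a set" where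
  "V_alpha V E q \<alpha> = {v \<in> V. reach_prob V E q v \<ge> \<alpha>}"

definition c_q :: "nat \<Rightarrow> nat" where
  "c_q q = (\<Sum>i\<le>q. q ^ i)"

end

theory Submission
  imports Defs
begin

fun gd :: "'a set \<Rightarrow> ('a \<Rightarrow> 'a \<Rightarrow> bool) \<Rightarrow> nat \<Rightarrow> 'a \<Rightarrow> nat \<Rightarrow> 'a \<Rightarrow> real" where
  "gd V E q v 0 x = 0"
| "gd V E q v (Suc d) x = real q / real (deg V E x) *
     (\<Sum>y\<in>nbrs V E x. (if y = v then 1 else 0) + gd V E q v d y)"

fun Phi :: "'a set \<Rightarrow> ('a \<Rightarrow> 'a \<Rightarrow> bool) \<Rightarrow> nat \<Rightarrow> 'a \<Rightarrow> 'a rbfs_state \<Rightarrow> real" where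
  "Phi V E q v (Q, lvl, HV, HE) = (if v \<in> HV then 1 else 0) +
     sum_list (map (\<lambda>w. gd V E q v (q - the (lvl w)) w) Q)"

fun Inv :: "'a set \<Rightarrow> nat \<Rightarrow> 'a rbfs_state \<Rightarrow> bool" where
  "Inv V q (Q, lvl, HV, HE) = (set Q \<subseteq> V \<and> (\<forall>w\<in>set Q. lvl w \<noteq> None \<and> the (lvl w) < q))"

lemma gd_nonneg: "0 \<le> gd V E q v d x"
  by (induction d arbitrary: x) (auto intro!: divide_nonneg_nonneg sum_nonneg mult_nonneg_nonneg add_nonneg_nonneg)

lemma Phi_nonneg: "0 \<le> Phi V E q v st"
proof -
  obtain Q lvl HV HE where st: "st = (Q, lvl, HV, HE)" by (cases st) auto
  show ?thesis unfolding st by (auto intro!: sum_list_nonneg add_nonneg_nonneg simp: gd_nonneg)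
qed

lemma fold_process:
  assumes "lu < q" "set ss \<subseteq> V" "Inv V q st"
  shows "Inv V q (fold (rbfs_process q u lu) ss st) \<and>
    Phi V E q v (fold (rbfs_process q u lu) ss st) \<le> Phi V E q v st +
      sum_list (map (\<lambda>s. (if s = v then 1 else 0) +
         (if lu < q - 1 then gd V E q v (q - (lu + 1)) s else 0)) ss)"
  using assms(2,3)
proof (induction ss arbitrary: st)
  case Nil
  then show ?case by simp
next
  case (Cons s ss)
  obtain Q lvl HV HE where st: "st = (Q, lvl, HV, HE)" by (cases st) auto
  let ?st' = "rbfs_process q u lu s st"
  have sV: "s \<in> V" using Cons.prems by auto
  have both: "Inv V q ?st' \<and> Phi V E q v ?st' \<le> Phi V E q v st + ((if s = v then 1 else 0) +
         (if lu < q - 1 then gd V E q v (q - (lu + 1)) s else 0))"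
  proof (cases "lu < q - 1 \<and> lvl s = None")
    case True
    have snot: "s \<notin> set Q" using Cons.prems True unfolding st by auto
    have eqm: "map (\<lambda>w. gd V E q v (q - the (if w = s then Some (Suc lu) else lvl w)) w) Q
        = map (\<lambda>w. gd V E q v (q - the (lvl w)) w) Q"
      using snot by (intro map_cong) auto
    show ?thesis using True Cons.prems sV assms(1) unfolding st rbfs_process_def
      by (auto simp: eqm gd_nonneg)
  next
    case False
    show ?thesis using False Cons.prems sV unfolding st rbfs_process_def
      by (auto simp: gd_nonneg)
  qed
  have inv': "Inv V q ?st'" and phi': "Phi V E q v ?st' \<le> Phi V E q v st + ((if s = v then 1 else 0) +
         (if lu < q - 1 then gd V E q v (q - (lu + 1)) s else 0))" using both by auto
  have "Inv V q (fold (rbfs_process q u lu) ss ?st') \<and>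
    Phi V E q v (fold (rbfs_process q u lu) ss ?st') \<le> Phi V E q v ?st' +
      sum_list (map (\<lambda>s. (if s = v then 1 else 0) +
         (if lu < q - 1 then gd V E q v (q - (lu + 1)) s else 0)) ss)"
    using Cons.IH[OF _ inv'] Cons.prems by auto
  then show ?case using phi' by simp
qed


lemma rn_set:
  assumes "finite (nbrs V E u)" "nbrs V E u \<noteq> {}"
  shows "ss \<in> set_pmf (rn_queries V E u k) \<Longrightarrow> set ss \<subseteq> nbrs V E u"
proof (induction k arbitrary: ss)
  case 0
  then show ?case by simp
next
  case (Suc k)
  then obtain s xs where "ss = s # xs" "s \<in> nbrs V E u" "xs \<in> set_pmf (rn_queries V E u k)"
    using assms by auto
  then show ?case using Suc.IH by auto
qed

lemma rn_exp:
  assumes fin: "finite (nbrs V E u)" and ne: "nbrs V E u \<noteq> {}" and hnn: "\<And>y. 0 \<le> h y"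
  shows "(\<integral>\<^sup>+ss. ennreal (sum_list (map h ss)) \<partial>rn_queries V E u k)
     = ennreal (real k * (\<Sum>y\<in>nbrs V E u. h y) / real (card (nbrs V E u)))"
proof (induction k)
  case 0
  then show ?case by simp
next
  case (Suc k)
  let ?N = "nbrs V E u"
  let ?A = "(\<Sum>y\<in>?N. h y) / real (card ?N)"
  have cpos: "0 < card ?N" using fin ne by (simp add: card_gt_0_iff)
  have Anonneg: "0 \<le> ?A" using hnn by (auto intro!: divide_nonneg_nonneg sum_nonneg)
  have kA: "0 \<le> real k * (\<Sum>y\<in>?N. h y) / real (card ?N)"
    by (intro divide_nonneg_nonneg mult_nonneg_nonneg sum_nonneg) (auto simp: hnn)
  have sl: "0 \<le> sum_list (map h xs)" for xs using hnn by (induction xs) (auto intro: add_nonneg_nonneg)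
  have inner: "(\<integral>\<^sup>+xs. ennreal (h s + sum_list (map h xs)) \<partial>rn_queries V E u k) = ennreal (h s + real k * ?A)" for s
  proof -
    have "(\<integral>\<^sup>+xs. ennreal (h s + sum_list (map h xs)) \<partial>rn_queries V E u k)
       = (\<integral>\<^sup>+xs. ennreal (h s) + ennreal (sum_list (map h xs)) \<partial>rn_queries V E u k)"
      using hnn sl by (simp add: ennreal_plus)
    also have "\<dots> = ennreal (h s) + (\<integral>\<^sup>+xs. ennreal (sum_list (map h xs)) \<partial>rn_queries V E u k)"
      by (subst nn_integral_add) (auto simp: measure_pmf.emeasure_space_1)
    also have "\<dots> = ennreal (h s) + ennreal (real k * ?A)" using Suc by simp
    also have "\<dots> = ennreal (h s + real k * ?A)"
      using hnn[of s] Anonneg by (subst ennreal_plus) (auto intro!: divide_nonneg_nonneg mult_nonneg_nonneg sum_nonneg hnn)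
    finally show ?thesis .
  qed
  have "(\<integral>\<^sup>+ss. ennreal (sum_list (map h ss)) \<partial>rn_queries V E u (Suc k))
     = (\<integral>\<^sup>+s. ennreal (h s + real k * ?A) \<partial>pmf_of_set ?N)"
    by (simp add: inner)
  also have "\<dots> = (\<Sum>s\<in>?N. ennreal (h s + real k * ?A)) / of_nat (card ?N)"
    using fin ne by (simp add: nn_integral_pmf_of_set)
  also have "\<dots> = ennreal (\<Sum>s\<in>?N. h s + real k * ?A) / ennreal (real (card ?N))"
    using hnn Anonneg by (subst sum_ennreal) (auto simp: ennreal_of_nat_eq_real_of_nat intro!: add_nonneg_nonneg divide_nonneg_nonneg mult_nonneg_nonneg sum_nonneg)
  also have "\<dots> = ennreal ((\<Sum>s\<in>?N. h s + real k * ?A) / real (card ?N))"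
    using hnn Anonneg cpos kA by (subst divide_ennreal) (auto intro!: sum_nonneg add_nonneg_nonneg)
  also have "(\<Sum>s\<in>?N. h s + real k * ?A) / real (card ?N) = real (Suc k) * ?A"
  proof -
    have "(\<Sum>s\<in>?N. h s + real k * ?A) = sum h ?N + real (card ?N) * (real k * ?A)"
      by (simp add: sum.distrib)
    then show ?thesis using cpos by (simp add: field_simps)
  qed
  finally show ?case by simp
qed


lemma step_lemma:
  assumes finV: "finite V" and ne: "\<And>u. u \<in> V \<Longrightarrow> nbrs V E u \<noteq> {}" and inv: "Inv V q st"
  shows "(\<forall>st'\<in>set_pmf (rbfs_step V E q st). Inv V q st') \<and>
    (\<integral>\<^sup>+x. ennreal (Phi V E q v x) \<partial>rbfs_step V E q st) \<le> ennreal (Phi V E q v st)"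
proof -
  obtain Q lvl HV HE where st: "st = (Q, lvl, HV, HE)" by (cases st) auto
  show ?thesis
  proof (cases Q)
    case Nil
    then show ?thesis using inv unfolding st rbfs_step_def by (simp add: Phi_nonneg)
  next
    case (Cons u Q')
    define lu where "lu = the (lvl u)"
    define st0 where "st0 = (Q', lvl, HV, HE)"
    define N where "N = nbrs V E u"
    have uV: "u \<in> V" and luq: "lu < q" using inv unfolding st Cons lu_def by auto
    have inv0: "Inv V q st0" using inv unfolding st Cons st0_def by auto
    have finN: "finite N" unfolding N_def nbrs_def using finV by auto
    have neN: "N \<noteq> {}" unfolding N_def using ne uV by auto
    have cpos: "0 < card N" using finN neN by (simp add: card_gt_0_iff)
    have NV: "N \<subseteq> V" unfolding N_def nbrs_def by auto
    have phist: "Phi V E q v st = Phi V E q v st0 + gd V E q v (q - lu) u"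
      unfolding st Cons st0_def lu_def by simp
    have stepeq: "rbfs_step V E q st = map_pmf (\<lambda>ss. fold (rbfs_process q u lu) ss st0) (rn_queries V E u q)"
      unfolding st Cons rbfs_step_def st0_def lu_def by simp
    define h where "h = (\<lambda>s. (if s = v then 1 else 0) +
         (if lu < q - 1 then gd V E q v (q - (lu + 1)) s else (0::real)))"
    have hnn: "0 \<le> h y" for y unfolding h_def by (simp add: gd_nonneg)
    have key: "ss \<in> set_pmf (rn_queries V E u q) \<Longrightarrow>
        Inv V q (fold (rbfs_process q u lu) ss st0) \<and>
        Phi V E q v (fold (rbfs_process q u lu) ss st0) \<le> Phi V E q v st0 + sum_list (map h ss)" for ss
    proof -
      assume "ss \<in> set_pmf (rn_queries V E u q)"
      then have "set ss \<subseteq> V" using rn_set[of V E u ss q] finN neN NV unfolding N_def by auto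
      then show ?thesis using fold_process[OF luq _ inv0, where ss=ss and E=E and v=v and u=u] unfolding h_def by simp
    qed
    have part1: "\<forall>st'\<in>set_pmf (rbfs_step V E q st). Inv V q st'"
      unfolding stepeq using key by auto
    have "(\<integral>\<^sup>+x. ennreal (Phi V E q v x) \<partial>rbfs_step V E q st)
        = (\<integral>\<^sup>+ss. ennreal (Phi V E q v (fold (rbfs_process q u lu) ss st0)) \<partial>rn_queries V E u q)"
      unfolding stepeq by simp
    also have "\<dots> \<le> (\<integral>\<^sup>+ss. ennreal (Phi V E q v st0) + ennreal (sum_list (map h ss)) \<partial>rn_queries V E u q)"
    proof (rule nn_integral_mono_AE)
      have sl: "0 \<le> sum_list (map h xs)" for xs using hnn by (induction xs) (auto intro: add_nonneg_nonneg)
      show "AE ss in measure_pmf (rn_queries V E u q). ennreal (Phi V E q v (fold (rbfs_process q u lu) ss st0))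
           \<le> ennreal (Phi V E q v st0) + ennreal (sum_list (map h ss))"
        unfolding AE_measure_pmf_iff
      proof
        fix ss assume "ss \<in> set_pmf (rn_queries V E u q)"
        then have "Phi V E q v (fold (rbfs_process q u lu) ss st0) \<le> Phi V E q v st0 + sum_list (map h ss)"
          using key by blast
        then have "ennreal (Phi V E q v (fold (rbfs_process q u lu) ss st0)) \<le> ennreal (Phi V E q v st0 + sum_list (map h ss))"
          by (rule ennreal_leI)
        also have "\<dots> = ennreal (Phi V E q v st0) + ennreal (sum_list (map h ss))"
          by (rule ennreal_plus[OF Phi_nonneg sl])
        finally show "ennreal (Phi V E q v (fold (rbfs_process q u lu) ss st0))
           \<le> ennreal (Phi V E q v st0) + ennreal (sum_list (map h ss))" .
      qed
    qed
    also have "\<dots> = ennreal (Phi V E q v st0) + (\<integral>\<^sup>+ss. ennreal (sum_list (map h ss)) \<partial>rn_queries V E u q)"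
      by (subst nn_integral_add) (auto simp: measure_pmf.emeasure_space_1)
    also have "\<dots> = ennreal (Phi V E q v st0) + ennreal (real q * (\<Sum>y\<in>N. h y) / real (card N))"
      using rn_exp[of V E u h q] finN neN hnn unfolding N_def by simp
    also have "\<dots> \<le> ennreal (Phi V E q v st0) + ennreal (gd V E q v (q - lu) u)"
    proof -
      obtain d where d: "q - lu = Suc d" using luq by (metis Suc_diff_Suc)
      have d2: "q - Suc lu = d" using d by simp
      have "(\<Sum>y\<in>N. h y) \<le> (\<Sum>y\<in>N. (if y = v then 1 else 0) + gd V E q v d y)"
        unfolding h_def using d2 by (intro sum_mono) (auto simp: gd_nonneg)
      then have "real q * (\<Sum>y\<in>N. h y) / real (card N) \<le> gd V E q v (q - lu) u"
        unfolding d using cpos by (simp add: deg_def N_def[symmetric] divide_right_mono mult_left_mono)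
      then show ?thesis by (simp add: add_left_mono ennreal_leI)
    qed
    also have "\<dots> = ennreal (Phi V E q v st)"
      unfolding phist by (rule ennreal_plus[OF Phi_nonneg gd_nonneg, symmetric])
    finally show ?thesis using part1 by simp
  qed
qed


lemma iter_lemma:
  assumes finV: "finite V" and ne: "\<And>u. u \<in> V \<Longrightarrow> nbrs V E u \<noteq> {}"
  shows "Inv V q st \<Longrightarrow> (\<integral>\<^sup>+x. ennreal (Phi V E q v x) \<partial>rbfs_iter V E q k st) \<le> ennreal (Phi V E q v st)"
proof (induction k arbitrary: st)
  case 0
  then show ?case by (simp add: Phi_nonneg)
next
  case (Suc k)
  have S: "(\<forall>st'\<in>set_pmf (rbfs_step V E q st). Inv V q st') \<and>
    (\<integral>\<^sup>+x. ennreal (Phi V E q v x) \<partial>rbfs_step V E q st) \<le> ennreal (Phi V E q v st)"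
    by (rule step_lemma[OF finV ne Suc.prems])
  have "(\<integral>\<^sup>+x. ennreal (Phi V E q v x) \<partial>rbfs_iter V E q (Suc k) st)
      = (\<integral>\<^sup>+st'. (\<integral>\<^sup>+x. ennreal (Phi V E q v x) \<partial>rbfs_iter V E q k st') \<partial>rbfs_step V E q st)"
    by simp
  also have "\<dots> \<le> (\<integral>\<^sup>+st'. ennreal (Phi V E q v st') \<partial>rbfs_step V E q st)"
    by (rule nn_integral_mono_AE) (use S Suc.IH in \<open>auto simp: AE_measure_pmf_iff\<close>)
  also have "\<dots> \<le> ennreal (Phi V E q v st)" using S by blast
  finally show ?case .
qed

lemma reach_u:
  assumes finV: "finite V" and ne: "\<And>u. u \<in> V \<Longrightarrow> nbrs V E u \<noteq> {}" and uV: "u \<in> V" and q: "0 < q"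
  shows "emeasure (measure_pmf (qRBFS V E q u)) {H. v \<in> fst H}
     \<le> ennreal ((if u = v then 1 else 0) + gd V E q v q u)"
proof -
  define st0 :: "'a rbfs_state" where "st0 = ([u], (\<lambda>_. None)(u := Some 0), {u}, {})"
  define f :: "'a rbfs_state \<Rightarrow> 'a set \<times> 'a set set" where "f = (\<lambda>(Q, lvl, HV, HE). (HV, HE))"
  let ?M = "rbfs_iter V E q (card V) st0"
  have inv0: "Inv V q st0" unfolding st0_def using uV q by simp
  have "emeasure (measure_pmf (qRBFS V E q u)) {H. v \<in> fst H} = emeasure (measure_pmf ?M) (f -` {H. v \<in> fst H})"
    unfolding qRBFS_def st0_def f_def by simp
  also have "\<dots> = (\<integral>\<^sup>+x. indicator (f -` {H. v \<in> fst H}) x \<partial>?M)"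
    by (simp add: nn_integral_indicator)
  also have "\<dots> \<le> (\<integral>\<^sup>+x. ennreal (Phi V E q v x) \<partial>?M)"
  proof (rule nn_integral_mono)
    fix x :: "'a rbfs_state"
    obtain Q lvl HV HE where x: "x = (Q, lvl, HV, HE)" by (cases x) auto
    have "0 \<le> sum_list (map (\<lambda>w. gd V E q v (q - the (lvl w)) w) Q)"
      by (intro sum_list_nonneg) (auto simp: gd_nonneg)
    then show "indicator (f -` {H. v \<in> fst H}) x \<le> ennreal (Phi V E q v x)"
      unfolding x f_def by (auto simp: indicator_def)
  qed
  also have "\<dots> \<le> ennreal (Phi V E q v st0)" by (rule iter_lemma[OF finV ne inv0])
  also have "Phi V E q v st0 = (if u = v then 1 else 0) + gd V E q v q u"
    unfolding st0_def by auto
  finally show ?thesis .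
qed


lemma swap_nbrs:
  assumes finV: "finite V" and sym: "\<And>x y. E x y \<Longrightarrow> E y x"
  shows "(\<Sum>x\<in>V. \<Sum>y\<in>nbrs V E x. G x y) = (\<Sum>y\<in>V. \<Sum>x\<in>nbrs V E y. (G x y :: real))"
proof -
  have "(\<Sum>x\<in>V. \<Sum>y\<in>nbrs V E x. G x y) = (\<Sum>x\<in>V. \<Sum>y\<in>V. if E x y then G x y else 0)"
    unfolding nbrs_def using finV by (simp add: sum.inter_filter)
  also have "\<dots> = (\<Sum>y\<in>V. \<Sum>x\<in>V. if E x y then G x y else 0)" by (rule sum.swap)
  also have "\<dots> = (\<Sum>y\<in>V. \<Sum>x\<in>V. if E y x then G x y else 0)"
  proof -
    have "E x y = E y x" for x y using sym by blast
    then show ?thesis by simp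
  qed
  also have "\<dots> = (\<Sum>y\<in>V. \<Sum>x\<in>nbrs V E y. G x y)"
    unfolding nbrs_def using finV by (simp add: sum.inter_filter)
  finally show ?thesis .
qed

lemma geo_step: "real q * (1 + (\<Sum>i<d. real q ^ Suc i)) = (\<Sum>i<Suc d. real q ^ Suc i)"
  by (induction d) (simp_all add: algebra_simps)

lemma weight:
  assumes finV: "finite V" and sym: "\<And>x y. E x y \<Longrightarrow> E y x"
    and ne: "\<And>u. u \<in> V \<Longrightarrow> nbrs V E u \<noteq> {}" and vV: "v \<in> V"
  shows "(\<forall>x\<in>V. 0 \<le> w x \<and> w x \<le> real (deg V E x)) \<Longrightarrow>
    (\<Sum>x\<in>V. w x * gd V E q v d x) \<le> real (deg V E v) * (\<Sum>i<d. real q ^ Suc i)"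
proof (induction d arbitrary: w)
  case 0
  then show ?case by simp
next
  case (Suc d)
  have finN: "finite (nbrs V E x)" for x unfolding nbrs_def using finV by auto
  have dpos: "x \<in> V \<Longrightarrow> 0 < real (deg V E x)" for x
    unfolding deg_def using finN ne by (simp add: card_gt_0_iff)
  have NV: "nbrs V E x \<subseteq> V" for x unfolding nbrs_def by auto
  define F where "F = (\<lambda>y. (if y = v then 1 else 0) + gd V E q v d y)"
  define w' where "w' = (\<lambda>y. \<Sum>x\<in>nbrs V E y. w x / real (deg V E x))"
  have w'b: "\<forall>y\<in>V. 0 \<le> w' y \<and> w' y \<le> real (deg V E y)"
  proof
    fix y assume yV: "y \<in> V"
    have "w' y \<le> (\<Sum>x\<in>nbrs V E y. 1)" unfolding w'_def
    proof (rule sum_mono)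
      fix x assume "x \<in> nbrs V E y"
      then have xV: "x \<in> V" using NV by auto
      then show "w x / real (deg V E x) \<le> 1" using Suc.prems dpos[OF xV] by simp
    qed
    moreover have "0 \<le> w' y" unfolding w'_def using Suc.prems NV
      by (intro sum_nonneg divide_nonneg_nonneg) auto
    ultimately show "0 \<le> w' y \<and> w' y \<le> real (deg V E y)" by (simp add: deg_def)
  qed
  have "(\<Sum>x\<in>V. w x * gd V E q v (Suc d) x) = (\<Sum>x\<in>V. \<Sum>y\<in>nbrs V E x. real q * (w x / real (deg V E x) * F y))"
    by (simp add: F_def sum_distrib_left mult_ac)
  also have "\<dots> = (\<Sum>y\<in>V. \<Sum>x\<in>nbrs V E y. real q * (w x / real (deg V E x) * F y))"
    by (rule swap_nbrs[OF finV sym])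
  also have "\<dots> = real q * (\<Sum>y\<in>V. w' y * F y)"
    by (simp add: w'_def sum_distrib_left sum_distrib_right mult_ac)
  also have "(\<Sum>y\<in>V. w' y * F y) = w' v + (\<Sum>y\<in>V. w' y * gd V E q v d y)"
  proof -
    have e1: "(\<Sum>y\<in>V. w' y * (if y = v then 1 else 0)) = (\<Sum>y\<in>V. if y = v then w' y else 0)"
      by (intro sum.cong) auto
    have "(\<Sum>y\<in>V. w' y * F y) = (\<Sum>y\<in>V. w' y * (if y = v then 1 else 0)) + (\<Sum>y\<in>V. w' y * gd V E q v d y)"
      unfolding F_def distrib_left by (rule sum.distrib)
    then show ?thesis unfolding e1 using finV vV by simp
  qed
  also have "\<dots> \<le> real (deg V E v) + real (deg V E v) * (\<Sum>i<d. real q ^ Suc i)"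
    using w'b vV Suc.IH[OF w'b] by (intro add_mono) auto
  finally have "(\<Sum>x\<in>V. w x * gd V E q v (Suc d) x) \<le> real q * (real (deg V E v) + real (deg V E v) * (\<Sum>i<d. real q ^ Suc i))"
    by (simp add: mult_left_mono)
  also have "\<dots> = real (deg V E v) * (real q * (1 + (\<Sum>i<d. real q ^ Suc i)))"
    by (simp add: algebra_simps)
  also have "\<dots> = real (deg V E v) * (\<Sum>i<Suc d. real q ^ Suc i)" by (simp only: geo_step)
  finally show ?case .
qed


lemma cq_eq: "real (c_q q) = 1 + (\<Sum>i<q. real q ^ Suc i)"
proof -
  have "real (c_q q) = (\<Sum>i<Suc q. real q ^ i)"
    unfolding c_q_def lessThan_Suc_atMost by simp
  also have "\<dots> = 1 + (\<Sum>i<q. real q ^ Suc i)"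
    by (subst sum.lessThan_Suc_shift) simp
  finally show ?thesis .
qed

theorem lemma3p9:
  fixes V :: "'a set" and E :: "'a \<Rightarrow> 'a \<Rightarrow> bool" and q :: nat and \<alpha> :: real and v :: 'a
  assumes "finite V"
    and "\<And>x y. E x y \<Longrightarrow> x \<in> V \<and> y \<in> V"
    and "\<And>x y. E x y \<Longrightarrow> E y x"
    and "\<And>x. \<not> E x x"
    and "\<And>u. u \<in> V \<Longrightarrow> nbrs V E u \<noteq> {}"
    and "q > 0"
    and "0 < \<alpha>" and "\<alpha> \<le> 1"
    and "v \<in> V_alpha V E q \<alpha>"
  shows "real (deg V E v) \<ge> real (card V) * \<alpha> / real (c_q q)"
proof -
  note finV = assms(1) and sym = assms(3) and ne = assms(5) and q = assms(6)
  have vV: "v \<in> V" and ra: "\<alpha> \<le> reach_prob V E q v" using assms(9) unfolding V_alpha_def by auto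
  have Vne: "V \<noteq> {}" using vV by auto
  have cV: "0 < card V" using finV Vne by (simp add: card_gt_0_iff)
  have finN: "finite (nbrs V E x)" for x unfolding nbrs_def using finV by auto
  have dpos: "x \<in> V \<Longrightarrow> 1 \<le> real (deg V E x)" for x
    unfolding deg_def using finN ne by (simp add: Suc_le_eq card_gt_0_iff)
  define b where "b = (\<lambda>u. (if u = v then 1 else 0) + gd V E q v q u)"
  have bnn: "0 \<le> b u" for u unfolding b_def by (simp add: gd_nonneg)
  define A where "A = {H :: 'a set \<times> 'a set set. v \<in> fst H}"
  have "ennreal (reach_prob V E q v) = emeasure (measure_pmf (bind_pmf (pmf_of_set V) (qRBFS V E q))) A"
    unfolding reach_prob_def A_def by (simp add: measure_pmf.emeasure_eq_measure)
  also have "\<dots> = (\<integral>\<^sup>+u. emeasure (measure_pmf (qRBFS V E q u)) A \<partial>pmf_of_set V)" by simp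
  also have "\<dots> \<le> (\<integral>\<^sup>+u. ennreal (b u) \<partial>pmf_of_set V)"
  proof (rule nn_integral_mono_AE)
    show "AE u in measure_pmf (pmf_of_set V). emeasure (measure_pmf (qRBFS V E q u)) A \<le> ennreal (b u)"
      unfolding AE_measure_pmf_iff
    proof
      fix u assume "u \<in> set_pmf (pmf_of_set V)"
      then have "u \<in> V" using finV Vne by simp
      from reach_u[OF finV ne this q, of v]
      show "emeasure (measure_pmf (qRBFS V E q u)) A \<le> ennreal (b u)" unfolding A_def b_def .
    qed
  qed
  also have "\<dots> = (\<Sum>u\<in>V. ennreal (b u)) / of_nat (card V)"
    using finV Vne by (simp add: nn_integral_pmf_of_set)
  also have "\<dots> = ennreal ((\<Sum>u\<in>V. b u) / real (card V))"
    using bnn cV by (simp add: sum_ennreal ennreal_of_nat_eq_real_of_nat divide_ennreal sum_nonneg)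
  finally have rle: "reach_prob V E q v \<le> (\<Sum>u\<in>V. b u) / real (card V)"
    using bnn by (simp add: ennreal_le_iff sum_nonneg divide_nonneg_nonneg)
  have "(\<Sum>u\<in>V. b u) = 1 + (\<Sum>u\<in>V. 1 * gd V E q v q u)"
    unfolding b_def using finV vV by (simp add: sum.distrib)
  also have "(\<Sum>u\<in>V. 1 * gd V E q v q u) \<le> real (deg V E v) * (\<Sum>i<q. real q ^ Suc i)"
    by (rule weight[OF finV sym ne vV]) (use dpos in auto)
  finally have "(\<Sum>u\<in>V. b u) \<le> 1 + real (deg V E v) * (\<Sum>i<q. real q ^ Suc i)" by simp
  also have "\<dots> \<le> real (deg V E v) * real (c_q q)"
    unfolding cq_eq using dpos[OF vV] by (simp add: algebra_simps)
  finally have sb: "(\<Sum>u\<in>V. b u) \<le> real (deg V E v) * real (c_q q)" .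
  have cqpos: "0 < real (c_q q)" unfolding cq_eq by (simp add: sum_nonneg add_pos_nonneg)
  have "\<alpha> \<le> real (deg V E v) * real (c_q q) / real (card V)"
    using ra rle sb cV by (meson divide_right_mono of_nat_0_le_iff order_trans)
  then have "real (card V) * \<alpha> \<le> real (deg V E v) * real (c_q q)"
    using cV by (simp add: field_simps)
  then show ?thesis using cqpos by (simp add: field_simps)
qed

end
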